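(* Let $p(x,y)$ be a real polynomial and $A\in\mathbb{N}_0^2$ such that the exponent vectors $k$ of the terms of $p$ take exactly two distinct values $B_1^A<B_2^A$ of $\langle A,k\rangle$, i.e. $p=\varphi_1^A+\varphi_2^A$ where $\varphi_j^A$ is the sum of the terms of $p$ with $\langle A,k\rangle=B_j^A$. Then there is no $\bar A\in\mathbb{N}_0^2$ with $\bar A\neq A$ such that the main $\bar A$-quasi-homogeneous form of $p$ contains more than two terms.
   Context: $\mathbb{N}=\{1,2,\dots\}$; $\mathbb{N}_0^2$ is the set of $(A_1,A_2)\in\mathbb{N}^2$ with $\gcd(A_1,A_2)=1$. The main $\bar A$-quasi-homogeneous form of $p$ is the sum of the terms of $p$ whose exponent vectors $k$ minimize $\langle\bar A,k\rangle$ over the set of exponent vectors of terms of $p$ with nonzero coefficients. *)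

theory Defs
  imports Complex_Main
begin

text \<open>A real polynomial in two variables x, y is represented by its finitely supported
coefficient function: p (k1,k2) is the coefficient of x^k1 y^k2.\<close>

type_synonym bipoly = "nat \<times> nat \<Rightarrow> real"

definition is_bipoly :: "bipoly \<Rightarrow> bool" where
  "is_bipoly p \<longleftrightarrow> finite {k. p k \<noteq> 0}"

definition terms_of :: "bipoly \<Rightarrow> (nat \<times> nat) set" where
  "terms_of p = {k. p k \<noteq> 0}"

definition N02 :: "(nat \<times> nat) set" where
  "N02 = {A. fst A \<ge> 1 \<and> snd A \<ge> 1 \<and> gcd (fst A) (snd A) = 1}"

definition qdeg :: "nat \<times> nat \<Rightarrow> nat \<times> nat \<Rightarrow> nat" where
  "qdeg A k = fst A * fst k + snd A * snd k"

definition main_form :: "nat \<times> nat \<Rightarrow> bipoly \<Rightarrow> bipoly" where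
  "main_form A p = (\<lambda>k. if k \<in> terms_of p \<and> (\<forall>k'\<in>terms_of p. qdeg A k \<le> qdeg A k')
                         then p k else 0)"

end

theory Submission
  imports Defs
begin

lemma det_zero:
  fixes a1 a2 b1 b2 d1 d2 :: int
  assumes "a1*d1 + a2*d2 = 0" "b1*d1 + b2*d2 = 0" "d1 \<noteq> 0 \<or> d2 \<noteq> 0"
  shows "a1*b2 = a2*b1"
proof -
  have e1: "(a1*b2 - a2*b1)*d1 = 0"
  proof -
    have "(a1*b2 - a2*b1)*d1 = b2*(a1*d1 + a2*d2) - a2*(b1*d1 + b2*d2)" by (simp add: algebra_simps)
    then show ?thesis using assms by simp
  qed
  have e2: "(a1*b2 - a2*b1)*d2 = 0"
  proof -
    have "(a1*b2 - a2*b1)*d2 = a1*(b1*d1 + b2*d2) - b1*(a1*d1 + a2*d2)" by (simp add: algebra_simps)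
    then show ?thesis using assms by simp
  qed
  show ?thesis using e1 e2 assms(3) by auto
qed

lemma same_vec:
  fixes a1 a2 b1 b2 :: nat
  assumes "a1*b2 = a2*b1" "coprime a1 a2" "coprime b1 b2" "a1 \<ge> 1" "b1 \<ge> 1"
  shows "a1 = b1 \<and> a2 = b2"
proof -
  have "a1 dvd a2*b1" using assms(1) by (metis dvd_triv_left)
  hence h1: "a1 dvd b1" using assms(2) by (simp add: coprime_dvd_mult_right_iff)
  have "b1 dvd a1*b2" using assms(1) by (metis dvd_triv_right mult.commute)
  hence "b1 dvd a1" using assms(3) by (simp add: coprime_dvd_mult_left_iff)
  hence "a1 = b1" using h1 by (simp add: dvd_antisym)
  moreover then have "a2 = b2" using assms(1,5) by (simp add: mult.commute)
  ultimately show ?thesis by simp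
qed

lemma key:
  assumes "A \<in> N02" "B \<in> N02" "qdeg A k = qdeg A l" "qdeg B k = qdeg B l" "k \<noteq> l"
  shows "A = B"
proof -
  obtain a1 a2 where A: "A = (a1,a2)" by fastforce
  obtain b1 b2 where B: "B = (b1,b2)" by fastforce
  obtain k1 k2 where k: "k = (k1,k2)" by fastforce
  obtain l1 l2 where l: "l = (l1,l2)" by fastforce
  have ha: "int a1 * (int k1 - int l1) + int a2 * (int k2 - int l2) = 0"
    using assms(3) unfolding A k l qdeg_def
    by (simp add: algebra_simps) (metis of_nat_add of_nat_mult)
  have hb: "int b1 * (int k1 - int l1) + int b2 * (int k2 - int l2) = 0"
    using assms(4) unfolding B k l qdeg_def
    by (simp add: algebra_simps) (metis of_nat_add of_nat_mult)
  have "int k1 - int l1 \<noteq> 0 \<or> int k2 - int l2 \<noteq> 0" using assms(5) k l by auto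
  from det_zero[OF ha hb this] have "int (a1*b2) = int (a2*b1)" by simp
  hence "a1*b2 = a2*b1" by linarith
  moreover have "coprime a1 a2" "a1 \<ge> 1" using assms(1) A unfolding N02_def by (auto simp: coprime_iff_gcd_eq_1)
  moreover have "coprime b1 b2" "b1 \<ge> 1" using assms(2) B unfolding N02_def by (auto simp: coprime_iff_gcd_eq_1)
  ultimately show ?thesis using same_vec A B by blast
qed

theorem mainTheorem13:
  fixes p :: bipoly and A :: "nat \<times> nat"
  assumes "is_bipoly p"
    and "A \<in> N02"
    and "card (qdeg A ` terms_of p) = 2"
  shows "\<not> (\<exists>Abar \<in> N02. Abar \<noteq> A \<and> card (terms_of (main_form Abar p)) > 2)"
proof
  assume "\<exists>Abar \<in> N02. Abar \<noteq> A \<and> card (terms_of (main_form Abar p)) > 2"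
  then obtain Ab where Ab: "Ab \<in> N02" "Ab \<noteq> A" and c: "card (terms_of (main_form Ab p)) > 2" by blast
  define S where "S = terms_of (main_form Ab p)"
  have S: "S = {k \<in> terms_of p. \<forall>k'\<in>terms_of p. qdeg Ab k \<le> qdeg Ab k'}"
    unfolding S_def terms_of_def main_form_def by auto
  have fin: "finite (terms_of p)" using assms(1) unfolding is_bipoly_def terms_of_def .
  have "\<not> inj_on (qdeg A) S"
  proof
    assume "inj_on (qdeg A) S"
    hence "card S = card (qdeg A ` S)" by (simp add: card_image)
    also have "\<dots> \<le> card (qdeg A ` terms_of p)"
      by (rule card_mono) (use fin S in auto)
    finally show False using c assms(3) S_def by simp
  qed
  then obtain k l where kl: "k \<in> S" "l \<in> S" "k \<noteq> l" "qdeg A k = qdeg A l"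
    unfolding inj_on_def by blast
  have "qdeg Ab k = qdeg Ab l" using kl(1,2) S by (simp add: order_antisym)
  from key[OF assms(2) Ab(1) kl(4) this kl(3)] Ab(2) show False by simp
qed

end
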